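(* Let $c\ge1$, let $G\cong F/R$ with $F$ free, and let $B=S/R$ be a normal subgroup of $G$ (with $R\le S\trianglelefteq F$), so that $A=G/B\cong F/S$. For $2\le i\le c+1$ let $\gamma_{c+1}(S,F)_i=[D_1,D_2,\dots,D_{c+1}]$ where $D_1=D_i=S$ and $D_j=F$ for $j\ne1,i$. Then there is an epimorphism $$\otimes^{c+1}(B,A)\longrightarrow\frac{[S,{}_cF]}{[R,{}_cF]\,[S,{}_{c+1}F]\,\prod_{i=2}^{c+1}\gamma_{c+1}(S,F)_i},$$ sending $sRS'\otimes f_1SF'\otimes\cdots\otimes f_cSF'$ to the coset of $[s,f_1,\dots,f_c]$ ($s\in S$, $f_i\in F$).
   Context: Commutators are left-normed: $[x_1,\dots,x_{m+1}]=[[x_1,\dots,x_m],x_{m+1}]$, and similarly $[D_1,\dots,D_{m+1}]=[[D_1,\dots,D_m],D_{m+1}]$ for subgroups. $[U,{}_0V]=U$, $[U,{}_{i+1}V]=[[U,{}_iV],V]$. For groups $B,A$, $\otimes^{c+1}(B,A)$ denotes the tensor product over $\mathbb Z$ $B_{ab}\otimes A_{ab}\otimes\cdots\otimes A_{ab}$ with $c$ copies of $A_{ab}$, where $X_{ab}=X/X'$; here $B_{ab}\cong S/RS'$ and $A_{ab}\cong F/SF'$. *)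

theory Defs
  imports "HOL-Algebra.Algebra" "HOL-Algebra.Free_Abelian_Groups"
begin

definition gcomm :: "('a,'b) monoid_scheme \<Rightarrow> 'a \<Rightarrow> 'a \<Rightarrow> 'a" where
  "gcomm G x y = inv\<^bsub>G\<^esub> x \<otimes>\<^bsub>G\<^esub> inv\<^bsub>G\<^esub> y \<otimes>\<^bsub>G\<^esub> x \<otimes>\<^bsub>G\<^esub> y"

fun lcomm :: "('a,'b) monoid_scheme \<Rightarrow> 'a \<Rightarrow> 'a list \<Rightarrow> 'a" where
  "lcomm G x [] = x"
| "lcomm G x (y # ys) = lcomm G (gcomm G x y) ys"

definition commsub :: "('a,'b) monoid_scheme \<Rightarrow> 'a set \<Rightarrow> 'a set \<Rightarrow> 'a set" where
  "commsub G H K = generate G {gcomm G h k | h k. h \<in> H \<and> k \<in> K}"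

fun itcomm :: "('a,'b) monoid_scheme \<Rightarrow> 'a set \<Rightarrow> 'a set \<Rightarrow> nat \<Rightarrow> 'a set" where
  "itcomm G U V 0 = U"
| "itcomm G U V (Suc i) = commsub G (itcomm G U V i) V"

fun lcommsub :: "('a,'b) monoid_scheme \<Rightarrow> 'a set \<Rightarrow> 'a set list \<Rightarrow> 'a set" where
  "lcommsub G D [] = D"
| "lcommsub G D (E # Es) = lcommsub G (commsub G D E) Es"

definition gammaSF :: "('a,'b) monoid_scheme \<Rightarrow> 'a set \<Rightarrow> nat \<Rightarrow> nat \<Rightarrow> 'a set" where
  "gammaSF F S c i = lcommsub F S (map (\<lambda>j. if j = i then S else carrier F) [2..<c+2])"

definition word_val :: "('a,'b) monoid_scheme \<Rightarrow> ('a \<times> bool) list \<Rightarrow> 'a" where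
  "word_val G w = foldr (\<lambda>(x,b) y. (if b then x else inv\<^bsub>G\<^esub> x) \<otimes>\<^bsub>G\<^esub> y) w \<one>\<^bsub>G\<^esub>"

definition reduced_word :: "('a \<times> bool) list \<Rightarrow> bool" where
  "reduced_word w = (\<forall>i. Suc i < length w \<longrightarrow>
       \<not> (fst (w ! i) = fst (w ! Suc i) \<and> snd (w ! i) \<noteq> snd (w ! Suc i)))"

definition free_basis :: "('a,'b) monoid_scheme \<Rightarrow> 'a set \<Rightarrow> bool" where
  "free_basis G Bs = (Bs \<subseteq> carrier G \<and> generate G Bs = carrier G \<and>
     (\<forall>w. w \<noteq> [] \<and> fst ` set w \<subseteq> Bs \<and> reduced_word w \<longrightarrow> \<not> (word_val G w = \<one>\<^bsub>G\<^esub>)))"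

definition free_group :: "('a,'b) monoid_scheme \<Rightarrow> bool" where
  "free_group G = (group G \<and> (\<exists>XX. free_basis G XX))"

(* Tensor product over Z of XX with c copies of YY (XX, YY abelian groups):
   free abelian group on XX \<times> YY^c modulo multilinearity relations *)
definition tens_gens :: "('x,'m) monoid_scheme \<Rightarrow> ('y,'n) monoid_scheme \<Rightarrow> nat \<Rightarrow> ('x \<times> 'y list) set" where
  "tens_gens XX YY c = carrier XX \<times> {as. length as = c \<and> set as \<subseteq> carrier YY}"

definition tens_free :: "('x,'m) monoid_scheme \<Rightarrow> ('y,'n) monoid_scheme \<Rightarrow> nat \<Rightarrow> (('x \<times> 'y list) \<Rightarrow>\<^sub>0 int) monoid" where
  "tens_free XX YY c = free_Abelian_group (tens_gens XX YY c)"

definition tens_rels :: "('x,'m) monoid_scheme \<Rightarrow> ('y,'n) monoid_scheme \<Rightarrow> nat \<Rightarrow> (('x \<times> 'y list) \<Rightarrow>\<^sub>0 int) set" where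
  "tens_rels XX YY c =
     {frag_of (b1 \<otimes>\<^bsub>XX\<^esub> b2, as) - frag_of (b1, as) - frag_of (b2, as) | b1 b2 as.
        b1 \<in> carrier XX \<and> b2 \<in> carrier XX \<and> length as = c \<and> set as \<subseteq> carrier YY}
   \<union> {frag_of (b, as[j := a1 \<otimes>\<^bsub>YY\<^esub> a2]) - frag_of (b, as[j := a1]) - frag_of (b, as[j := a2])
        | b as j a1 a2. b \<in> carrier XX \<and> length as = c \<and> set as \<subseteq> carrier YY \<and> j < c
        \<and> a1 \<in> carrier YY \<and> a2 \<in> carrier YY}"

definition tensor :: "('x,'m) monoid_scheme \<Rightarrow> ('y,'n) monoid_scheme \<Rightarrow> nat \<Rightarrow> (('x \<times> 'y list) \<Rightarrow>\<^sub>0 int) set monoid" where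
  "tensor XX YY c = tens_free XX YY c Mod generate (tens_free XX YY c) (tens_rels XX YY c)"

definition pure_tensor :: "('x,'m) monoid_scheme \<Rightarrow> ('y,'n) monoid_scheme \<Rightarrow> nat \<Rightarrow> 'x \<Rightarrow> 'y list \<Rightarrow> (('x \<times> 'y list) \<Rightarrow>\<^sub>0 int) set" where
  "pure_tensor XX YY c b as =
     generate (tens_free XX YY c) (tens_rels XX YY c) #>\<^bsub>tens_free XX YY c\<^esub> frag_of (b, as)"

end

theory Submission
  imports Defs
begin

lemma lcomm_append: "lcomm G x (xs @ ys) = lcomm G (lcomm G x xs) ys"
  by (induction xs arbitrary: x) auto

lemma itcomm_Suc': "itcomm G K C (Suc n) = itcomm G (commsub G K C) C n"
  by (induction n) auto

lemma itcomm_add: "itcomm G (itcomm G K C a) C b = itcomm G K C (a + b)"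
  by (induction b) auto

lemma lcommsub_append: "lcommsub G K (xs @ ys) = lcommsub G (lcommsub G K xs) ys"
  by (induction xs arbitrary: K) auto

lemma lcommsub_replicate: "lcommsub G K (replicate n C) = itcomm G K C n"
  by (induction n arbitrary: K) (simp_all add: itcomm_Suc' del: itcomm.simps(2))

lemma gammaSF_eq:
  assumes "2 \<le> i" "i \<le> c + 1"
  shows "gammaSF F S c i = itcomm F (commsub F (itcomm F S (carrier F) (i - 2)) S) (carrier F) (c + 1 - i)"
proof -
  have u: "[2..<c+2] = [2..<i] @ i # [Suc i..<c+2]"
  proof -
    have "[2..<c+2] = [2..<i] @ [i..<c+2]"
      using assms upt_add_eq_append[of 2 i "c + 2 - i"] by simp
    also have "[i..<c+2] = i # [Suc i..<c+2]"
      using assms by (simp add: upt_conv_Cons)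
    finally show ?thesis .
  qed
  have "map (\<lambda>j. if j = i then S else carrier F) [2..<c+2]
        = replicate (i - 2) (carrier F) @ S # replicate (c + 1 - i) (carrier F)"
  proof -
    have a: "map (\<lambda>j. if j = i then S else carrier F) [2..<i] = replicate (i - 2) (carrier F)"
    proof -
      have "map (\<lambda>j. if j = i then S else carrier F) [2..<i] = map (\<lambda>_. carrier F) [2..<i]"
        by (rule map_cong) auto
      then show ?thesis by (simp only: map_replicate_const length_upt) (use assms in \<open>simp?\<close>)
    qed
    have b: "map (\<lambda>j. if j = i then S else carrier F) [Suc i..<c+2] = replicate (c + 1 - i) (carrier F)"
    proof -
      have "map (\<lambda>j. if j = i then S else carrier F) [Suc i..<c+2] = map (\<lambda>_. carrier F) [Suc i..<c+2]"
        by (rule map_cong) auto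
      then show ?thesis by (simp only: map_replicate_const length_upt) (use assms in \<open>simp?\<close>)
    qed
    show ?thesis unfolding u using a b by simp
  qed
  then show ?thesis
    by (simp add: gammaSF_def lcommsub_append lcommsub_replicate)
qed

context group begin

lemma gcomm_closed[simp]: "x \<in> carrier G \<Longrightarrow> y \<in> carrier G \<Longrightarrow> gcomm G x y \<in> carrier G"
  by (simp add: gcomm_def)
lemma canc1[simp]: "x \<in> carrier G \<Longrightarrow> y \<in> carrier G \<Longrightarrow> x \<otimes> (inv x \<otimes> y) = y"
  by (simp add: m_assoc[symmetric])
lemma canc2[simp]: "x \<in> carrier G \<Longrightarrow> y \<in> carrier G \<Longrightarrow> inv x \<otimes> (x \<otimes> y) = y"
  by (simp add: m_assoc[symmetric])
lemma I1: "x \<in> carrier G \<Longrightarrow> y \<in> carrier G \<Longrightarrow> g \<in> carrier G \<Longrightarrow>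
  gcomm G (x \<otimes> y) g = gcomm G x g \<otimes> gcomm G (gcomm G x g) y \<otimes> gcomm G y g"
  by (simp add: gcomm_def m_assoc inv_mult_group)
lemma I1': "x \<in> carrier G \<Longrightarrow> y \<in> carrier G \<Longrightarrow> g \<in> carrier G \<Longrightarrow>
  gcomm G (x \<otimes> y) g = (gcomm G x g \<otimes> gcomm G y g) \<otimes> (inv (gcomm G y g) \<otimes> gcomm G (gcomm G x g) y \<otimes> gcomm G y g)"
  by (simp add: gcomm_def m_assoc inv_mult_group)
lemma I2: "x \<in> carrier G \<Longrightarrow> f \<in> carrier G \<Longrightarrow> g \<in> carrier G \<Longrightarrow>
  gcomm G x (f \<otimes> g) = gcomm G x f \<otimes> gcomm G x g \<otimes> (gcomm G (gcomm G x g) (gcomm G x f) \<otimes> gcomm G (gcomm G x f) g)"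
  by (simp add: gcomm_def m_assoc inv_mult_group)
lemma I3: "g \<in> carrier G \<Longrightarrow> h \<in> carrier G \<Longrightarrow> k \<in> carrier G \<Longrightarrow>
  g \<otimes> gcomm G h k \<otimes> inv g = gcomm G (g \<otimes> h \<otimes> inv g) (g \<otimes> k \<otimes> inv g)"
  by (simp add: gcomm_def m_assoc inv_mult_group)
lemma I4: "a \<in> carrier G \<Longrightarrow> k \<in> carrier G \<Longrightarrow> gcomm G a k = inv (gcomm G k a)"
  by (simp add: gcomm_def m_assoc inv_mult_group)
lemma I5: "x \<in> carrier G \<Longrightarrow> y \<in> carrier G \<Longrightarrow> x \<otimes> y = y \<otimes> x \<otimes> gcomm G x y"
  by (simp add: gcomm_def m_assoc inv_mult_group)
lemma gcomm_one_l[simp]: "g \<in> carrier G \<Longrightarrow> gcomm G \<one> g = \<one>"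
  by (simp add: gcomm_def)
lemma gcomm_one_r[simp]: "g \<in> carrier G \<Longrightarrow> gcomm G g \<one> = \<one>"
  by (simp add: gcomm_def)
lemma gcomm_expand: "a \<in> carrier G \<Longrightarrow> b \<in> carrier G \<Longrightarrow> gcomm G a b = inv a \<otimes> inv b \<otimes> a \<otimes> b"
  by (simp add: gcomm_def)

lemma lcomm_closed[simp]: "x \<in> carrier G \<Longrightarrow> set gs \<subseteq> carrier G \<Longrightarrow> lcomm G x gs \<in> carrier G"
  by (induction gs arbitrary: x) auto

lemma lcomm_one[simp]: "set gs \<subseteq> carrier G \<Longrightarrow> lcomm G \<one> gs = \<one>"
  by (induction gs) auto

lemma commsub_carrier: "H \<subseteq> carrier G \<Longrightarrow> K \<subseteq> carrier G \<Longrightarrow> commsub G H K \<subseteq> carrier G"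
  unfolding commsub_def apply (rule generate_incl) using gcomm_closed by blast

lemma commsub_subgroup: "H \<subseteq> carrier G \<Longrightarrow> K \<subseteq> carrier G \<Longrightarrow> subgroup (commsub G H K) G"
  unfolding commsub_def apply (rule generate_is_subgroup) using gcomm_closed by blast

lemma gcomm_in_commsub: "h \<in> H \<Longrightarrow> k \<in> K \<Longrightarrow> gcomm G h k \<in> commsub G H K"
  unfolding commsub_def by (rule generate.incl) auto

lemma commsub_mono: "H \<subseteq> H' \<Longrightarrow> K \<subseteq> K' \<Longrightarrow> commsub G H K \<subseteq> commsub G H' K'"
  unfolding commsub_def by (rule mono_generate) blast

lemma commsub_normal:
  assumes "H \<lhd> G" "K \<lhd> G" shows "commsub G H K \<lhd> G"
proof -
  interpret H: normal H G by fact
  interpret K: normal K G by fact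
  show ?thesis unfolding commsub_def
  proof (rule normal_generateI)
    show "{gcomm G h k |h k. h \<in> H \<and> k \<in> K} \<subseteq> carrier G" by auto
  next
    fix x g assume x: "x \<in> {gcomm G h k |h k. h \<in> H \<and> k \<in> K}" and g: "g \<in> carrier G"
    then obtain h k where hk: "x = gcomm G h k" "h \<in> H" "k \<in> K" by auto
    have "g \<otimes> x \<otimes> inv g = gcomm G (g \<otimes> h \<otimes> inv g) (g \<otimes> k \<otimes> inv g)"
      using hk g by (simp add: I3)
    moreover have "g \<otimes> h \<otimes> inv g \<in> H" "g \<otimes> k \<otimes> inv g \<in> K"
      using hk g H.inv_op_closed2 K.inv_op_closed2 by auto
    ultimately show "g \<otimes> x \<otimes> inv g \<in> {gcomm G h k |h k. h \<in> H \<and> k \<in> K}" by blast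
  qed
qed

lemma commsub_normal_sub:
  assumes "H \<lhd> G" "K \<subseteq> carrier G" shows "commsub G H K \<subseteq> H"
proof -
  interpret H: normal H G by fact
  show ?thesis unfolding commsub_def
  proof (rule generate_subgroup_incl)
    show "subgroup H G" by (rule H.subgroup_axioms)
    show "{gcomm G h k |h k. h \<in> H \<and> k \<in> K} \<subseteq> H"
    proof clarify
      fix h k assume hk: "h \<in> H" "k \<in> K"
      then have c: "h \<in> carrier G" "k \<in> carrier G" using assms by auto
      have "gcomm G h k = inv h \<otimes> (inv k \<otimes> h \<otimes> k)" using c by (simp add: gcomm_def m_assoc)
      moreover have "inv k \<otimes> h \<otimes> k \<in> H" using H.inv_op_closed1 c hk by auto
      ultimately show "gcomm G h k \<in> H" using hk by (simp add: H.m_closed H.m_inv_closed)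
    qed
  qed
qed

lemma normal_carrier_sub: "H \<lhd> G \<Longrightarrow> H \<subseteq> carrier G"
  by (simp add: normal_imp_subgroup subgroup.subset)

lemma itcomm_normal: "K \<lhd> G \<Longrightarrow> itcomm G K (carrier G) n \<lhd> G"
  by (induction n) (auto intro: commsub_normal normal_self)

lemma itcomm_mono: "K \<subseteq> K' \<Longrightarrow> itcomm G K C n \<subseteq> itcomm G K' C n"
  by (induction n) (simp_all, metis commsub_mono subset_refl subsetD)

lemma itcomm_antimono:
  assumes "K \<lhd> G" "m \<le> n" shows "itcomm G K (carrier G) n \<subseteq> itcomm G K (carrier G) m"
  using assms(2)
proof (induction n)
  case 0 then show ?case by simp
next
  case (Suc n)
  show ?case
  proof (cases "m = Suc n")
    case False
    then have "m \<le> n" using Suc by simp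
    then show ?thesis using Suc commsub_normal_sub[OF itcomm_normal[OF assms(1), of n]] by auto
  qed simp
qed

lemma lcomm_in_itcomm:
  assumes "K \<lhd> G" "x \<in> K" "set gs \<subseteq> carrier G"
  shows "lcomm G x gs \<in> itcomm G K (carrier G) (length gs)"
  using assms
proof (induction gs arbitrary: x K)
  case Nil then show ?case by simp
next
  case (Cons g gs)
  have "gcomm G x g \<in> commsub G K (carrier G)" using Cons by (intro gcomm_in_commsub) auto
  then have "lcomm G (gcomm G x g) gs \<in> itcomm G (commsub G K (carrier G)) (carrier G) (length gs)"
    using Cons by (intro Cons.IH) (auto intro: commsub_normal normal_self)
  then show ?case by (metis itcomm_Suc' length_Cons lcomm.simps(2))
qed

end


locale L22 = group F for F :: "('a,'b) monoid_scheme" (structure) +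
  fixes R S N :: "'a set" and c :: nat
  assumes RN: "R \<lhd> F" and SN: "S \<lhd> F" and RS: "R \<subseteq> S" and NN: "N \<lhd> F"
    and N_R: "itcomm F R (carrier F) c \<subseteq> N"
    and N_S: "itcomm F S (carrier F) (Suc c) \<subseteq> N"
    and N_G: "\<And>i. 2 \<le> i \<Longrightarrow> i \<le> c+1 \<Longrightarrow> gammaSF F S c i \<subseteq> N"
begin

abbreviation "T n \<equiv> itcomm F S (carrier F) n"
abbreviation "Q \<equiv> F Mod N"

lemma Qgrp: "group Q" by (rule normal.factorgroup_is_group[OF NN])

lemma pr_hom: "(\<lambda>a. N #> a) \<in> hom F Q" by (rule normal.r_coset_hom_Mod[OF NN])

lemma pr_mult: "x \<in> carrier F \<Longrightarrow> y \<in> carrier F \<Longrightarrow> N #> (x \<otimes> y) = (N #> x) \<otimes>\<^bsub>Q\<^esub> (N #> y)"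
  using pr_hom by (simp add: hom_mult)

lemma pr_carr: "x \<in> carrier F \<Longrightarrow> N #> x \<in> carrier Q"
  using pr_hom by (simp add: hom_in_carrier)

lemma pr_N: "x \<in> N \<Longrightarrow> N #> x = \<one>\<^bsub>Q\<^esub>"
  using NN by (simp add: normal_imp_subgroup subgroup.rcos_const is_group)

lemma N_carr: "N \<subseteq> carrier F" using NN normal_carrier_sub by blast

lemma pr_one: "N #> \<one> = \<one>\<^bsub>Q\<^esub>"
  by (simp add: pr_N NN normal_imp_subgroup subgroup.one_closed)

lemma pr_mult_N: "y \<in> carrier F \<Longrightarrow> k \<in> N \<Longrightarrow> N #> (y \<otimes> k) = N #> y"
proof -
  assume a: "y \<in> carrier F" "k \<in> N"
  then have "k \<in> carrier F" using N_carr by auto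
  then have "N #> (y \<otimes> k) = (N #> y) \<otimes>\<^bsub>Q\<^esub> \<one>\<^bsub>Q\<^esub>" using a pr_mult pr_N by simp
  then show ?thesis using a pr_carr monoid.r_one[OF group.is_monoid[OF Qgrp]] by simp
qed

lemma T_normal: "T n \<lhd> F" by (rule itcomm_normal[OF SN])
lemma T_carr: "T n \<subseteq> carrier F" using T_normal normal_carrier_sub by blast
lemma T_sub_S: "T n \<subseteq> S" using itcomm_antimono[OF SN, of 0 n] by simp
lemma T_N: "Suc c \<le> n \<Longrightarrow> T n \<subseteq> N" using itcomm_antimono[OF SN] N_S by blast
lemma S_carr: "S \<subseteq> carrier F" using SN normal_carrier_sub by blast

lemma L1:
  assumes "K \<lhd> F" "itcomm F K (carrier F) (length gs) \<subseteq> N" "y \<in> carrier F" "k \<in> K" "set gs \<subseteq> carrier F"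
  shows "N #> lcomm F (y \<otimes> k) gs = N #> lcomm F y gs"
  using assms
proof (induction gs arbitrary: y k K)
  case Nil
  have "k \<in> N" using Nil.prems(2,4) by auto
  then show ?case using pr_mult_N[OF Nil.prems(3)] by simp
next
  case (Cons g gs)
  have kc: "k \<in> carrier F" "g \<in> carrier F" using Cons.prems(1,4,5) normal_carrier_sub by auto
  let ?K' = "commsub F K (carrier F)"
  have K'n: "?K' \<lhd> F" using Cons.prems(1) by (intro commsub_normal normal_self)
  have e1: "gcomm F (gcomm F y g) k \<in> ?K'"
  proof -
    have "gcomm F k (gcomm F y g) \<in> ?K'" using Cons.prems(3,4) kc by (intro gcomm_in_commsub) auto
    then have "inv (gcomm F k (gcomm F y g)) \<in> ?K'"
      by (rule subgroup.m_inv_closed[OF normal_imp_subgroup[OF K'n]])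
    moreover have "gcomm F (gcomm F y g) k = inv (gcomm F k (gcomm F y g))"
      by (rule I4) (use kc Cons.prems(3) in auto)
    ultimately show ?thesis by simp
  qed
  have e2: "gcomm F k g \<in> ?K'" using Cons.prems(4) kc by (intro gcomm_in_commsub) auto
  have e: "gcomm F (gcomm F y g) k \<otimes> gcomm F k g \<in> ?K'"
    by (rule subgroup.m_closed[OF normal_imp_subgroup[OF K'n] e1 e2])
  have eq: "gcomm F (y \<otimes> k) g = gcomm F y g \<otimes> (gcomm F (gcomm F y g) k \<otimes> gcomm F k g)"
  proof -
    have "gcomm F (y \<otimes> k) g = gcomm F y g \<otimes> gcomm F (gcomm F y g) k \<otimes> gcomm F k g"
      by (rule I1) (use kc Cons.prems(3) in auto)
    then show ?thesis using kc Cons.prems(3) by (simp add: m_assoc)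
  qed
  have "N #> lcomm F (gcomm F y g \<otimes> (gcomm F (gcomm F y g) k \<otimes> gcomm F k g)) gs = N #> lcomm F (gcomm F y g) gs"
  proof (rule Cons.IH[OF K'n _ _ e])
    show "itcomm F ?K' (carrier F) (length gs) \<subseteq> N"
    proof -
      have "itcomm F ?K' (carrier F) (length gs) = itcomm F K (carrier F) (length (g#gs))"
        by (simp only: itcomm_Suc' length_Cons)
      then show ?thesis using Cons.prems(2) by simp
    qed
    show "gcomm F y g \<in> carrier F" using kc Cons.prems(3) by simp
    show "set gs \<subseteq> carrier F" using Cons.prems(5) by simp
  qed
  then show ?case using eq by simp
qed

lemma L2:
  assumes "x \<in> T j" "y \<in> S" "set gs \<subseteq> carrier F" "c \<le> j + length gs"
  shows "N #> lcomm F (x \<otimes> y) gs = (N #> lcomm F x gs) \<otimes>\<^bsub>Q\<^esub> (N #> lcomm F y gs)"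
  using assms
proof (induction gs arbitrary: x y j)
  case Nil
  then have "x \<in> carrier F" "y \<in> carrier F" using T_carr S_carr by auto
  then show ?case using pr_mult by simp
next
  case (Cons g gs)
  have c: "x \<in> carrier F" "y \<in> carrier F" "g \<in> carrier F"
    using Cons.prems T_carr[of j] S_carr by auto
  have xg: "gcomm F x g \<in> T (Suc j)" using Cons.prems(1) c by (simp add: gcomm_in_commsub)
  have yg: "gcomm F y g \<in> S"
  proof -
    have "gcomm F y g \<in> commsub F S (carrier F)" using Cons.prems(2) c by (intro gcomm_in_commsub)
    then show ?thesis using commsub_normal_sub[OF SN, of "carrier F"] by blast
  qed
  let ?e = "inv (gcomm F y g) \<otimes> gcomm F (gcomm F x g) y \<otimes> gcomm F y g"
  have e: "?e \<in> T (Suc (Suc j))"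
  proof -
    have "gcomm F (gcomm F x g) y \<in> T (Suc (Suc j))"
      using xg c by (simp add: gcomm_in_commsub)
    then show ?thesis by (intro normal.inv_op_closed1[OF T_normal]) (use c in auto)
  qed
  have eq: "gcomm F (x \<otimes> y) g = (gcomm F x g \<otimes> gcomm F y g) \<otimes> ?e"
    by (rule I1') (use c in auto)
  have "N #> lcomm F ((gcomm F x g \<otimes> gcomm F y g) \<otimes> ?e) gs = N #> lcomm F (gcomm F x g \<otimes> gcomm F y g) gs"
  proof (rule L1[OF T_normal _ _ e])
    have "Suc c \<le> Suc (Suc j) + length gs" using Cons.prems(4) by simp
    then show "itcomm F (T (Suc (Suc j))) (carrier F) (length gs) \<subseteq> N"
      unfolding itcomm_add by (rule T_N)
    show "gcomm F x g \<otimes> gcomm F y g \<in> carrier F" using c by simp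
    show "set gs \<subseteq> carrier F" using Cons.prems(3) by simp
  qed
  also have "\<dots> = (N #> lcomm F (gcomm F x g) gs) \<otimes>\<^bsub>Q\<^esub> (N #> lcomm F (gcomm F y g) gs)"
    using Cons.IH[OF xg yg] Cons.prems by simp
  finally show ?case using eq by simp
qed

end


context L22 begin

lemma L3:
  assumes s: "s \<in> S" and as: "set as \<subseteq> carrier F" and bs: "set bs \<subseteq> carrier F"
    and f: "f \<in> carrier F" and g: "g \<in> carrier F" and len: "c \<le> length as + length bs + 1"
  shows "N #> lcomm F s (as @ (f \<otimes> g) # bs)
       = (N #> lcomm F s (as @ f # bs)) \<otimes>\<^bsub>Q\<^esub> (N #> lcomm F s (as @ g # bs))"
proof -
  define x where "x = lcomm F s as"
  have xT: "x \<in> T (length as)" unfolding x_def by (rule lcomm_in_itcomm[OF SN s as])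
  have xc: "x \<in> carrier F" using xT T_carr by blast
  define e where "e = gcomm F (gcomm F x g) (gcomm F x f) \<otimes> gcomm F (gcomm F x f) g"
  have eq: "gcomm F x (f \<otimes> g) = (gcomm F x f \<otimes> gcomm F x g) \<otimes> e"
    unfolding e_def by (rule I2) (use xc f g in auto)
  have xf: "gcomm F x f \<in> T (Suc (length as))" using xT f by (simp add: gcomm_in_commsub)
  have xg': "gcomm F x g \<in> T (Suc (length as))" using xT g by (simp add: gcomm_in_commsub)
  have xg: "gcomm F x g \<in> S" using xg' T_sub_S by blast
  have e: "e \<in> T (Suc (Suc (length as)))"
  proof -
    have "gcomm F (gcomm F x g) (gcomm F x f) \<in> T (Suc (Suc (length as)))"
      using xg' xc f by (simp add: gcomm_in_commsub)
    moreover have "gcomm F (gcomm F x f) g \<in> T (Suc (Suc (length as)))"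
      using xf g by (simp add: gcomm_in_commsub)
    ultimately show ?thesis unfolding e_def
      by (rule subgroup.m_closed[OF normal_imp_subgroup[OF T_normal]])
  qed
  have "N #> lcomm F s (as @ (f \<otimes> g) # bs) = N #> lcomm F ((gcomm F x f \<otimes> gcomm F x g) \<otimes> e) bs"
    by (simp add: lcomm_append x_def[symmetric] eq)
  also have "\<dots> = N #> lcomm F (gcomm F x f \<otimes> gcomm F x g) bs"
  proof (rule L1[OF T_normal _ _ e bs])
    have "Suc c \<le> Suc (Suc (length as)) + length bs" using len by simp
    then show "itcomm F (T (Suc (Suc (length as)))) (carrier F) (length bs) \<subseteq> N"
      unfolding itcomm_add by (rule T_N)
    show "gcomm F x f \<otimes> gcomm F x g \<in> carrier F" using xc f g by simp
  qed
  also have "\<dots> = (N #> lcomm F (gcomm F x f) bs) \<otimes>\<^bsub>Q\<^esub> (N #> lcomm F (gcomm F x g) bs)"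
    by (rule L2[OF xf xg bs]) (use len in simp)
  also have "\<dots> = (N #> lcomm F s (as @ f # bs)) \<otimes>\<^bsub>Q\<^esub> (N #> lcomm F s (as @ g # bs))"
    by (simp add: lcomm_append x_def[symmetric])
  finally show ?thesis .
qed

lemma pr_comm:
  assumes "x \<in> T c" "y \<in> T c"
  shows "(N #> x) \<otimes>\<^bsub>Q\<^esub> (N #> y) = (N #> y) \<otimes>\<^bsub>Q\<^esub> (N #> x)"
proof -
  have c: "x \<in> carrier F" "y \<in> carrier F" using assms T_carr by auto
  have eq: "x \<otimes> y = (y \<otimes> x) \<otimes> gcomm F x y" by (rule I5) (use c in auto)
  have "gcomm F x y \<in> T (Suc c)" using assms c by (simp add: gcomm_in_commsub)
  then have "gcomm F x y \<in> N" using T_N by blast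
  then have "N #> (x \<otimes> y) = N #> (y \<otimes> x)" using eq c pr_mult_N by simp
  then show ?thesis using c pr_mult by simp
qed

lemma L4:
  assumes s: "s \<in> S" and k: "k \<in> S" and as: "set as \<subseteq> carrier F" and bs: "set bs \<subseteq> carrier F"
    and len: "length as + length bs + 1 = c"
  shows "lcomm F s (as @ k # bs) \<in> N"
proof -
  let ?K = "commsub F (T (length as)) S"
  have Kn: "?K \<lhd> F" by (rule commsub_normal[OF T_normal SN])
  have "gcomm F (lcomm F s as) k \<in> ?K"
    by (rule gcomm_in_commsub[OF lcomm_in_itcomm[OF SN s as] k])
  then have "lcomm F (gcomm F (lcomm F s as) k) bs \<in> itcomm F ?K (carrier F) (length bs)"
    by (rule lcomm_in_itcomm[OF Kn _ bs])
  moreover have "gammaSF F S c (length as + 2) = itcomm F ?K (carrier F) (length bs)"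
  proof -
    have i: "2 \<le> length as + 2" "length as + 2 \<le> c + 1" using len by simp_all
    have d: "c + 1 - (length as + 2) = length bs" using len by simp
    show ?thesis using gammaSF_eq[OF i, of F S] unfolding d by simp
  qed
  moreover have "gammaSF F S c (length as + 2) \<subseteq> N" using N_G len by simp
  ultimately show ?thesis by (simp add: lcomm_append) blast
qed

lemma L5:
  assumes "r \<in> R" "set fs \<subseteq> carrier F" "length fs = c"
  shows "lcomm F r fs \<in> N"
  using lcomm_in_itcomm[OF RN assms(1,2)] N_R assms(3) by blast

lemma L6:
  assumes "u \<in> commsub F S S" "set fs \<subseteq> carrier F" "length fs = c"
  shows "lcomm F u fs \<in> N"
proof -
  have Kn: "commsub F S S \<lhd> F" by (rule commsub_normal[OF SN SN])
  have "lcomm F u fs \<in> itcomm F (commsub F S S) (carrier F) c"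
    using lcomm_in_itcomm[OF Kn assms(1,2)] assms(3) by simp
  also have "\<dots> \<subseteq> itcomm F (T 1) (carrier F) c"
    by (rule itcomm_mono) (simp add: commsub_mono S_carr)
  also have "\<dots> = T (Suc c)" by (subst itcomm_add) simp
  finally show ?thesis using N_S by blast
qed

end


context L22 begin

declare one_FactGroup[simp del] mult_FactGroup[simp del]

abbreviation "H \<equiv> generate F (R \<union> commsub F S S)"
abbreviation "H2 \<equiv> generate F (S \<union> commsub F (carrier F) (carrier F))"

lemma SS_sub_S: "commsub F S S \<subseteq> S"
proof -
  have "commsub F S S \<subseteq> commsub F S (carrier F)" by (rule commsub_mono) (auto simp: S_carr)
  also have "\<dots> \<subseteq> S" by (rule commsub_normal_sub[OF SN]) simp
  finally show ?thesis .
qed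

lemma H_sub_S: "H \<subseteq> S"
  by (rule generate_subgroup_incl) (use RS SS_sub_S normal_imp_subgroup[OF SN] in auto)

lemma H_subgroup: "subgroup H F"
  by (rule generate_is_subgroup) (use RS SS_sub_S S_carr in auto)

lemma H2_subgroup: "subgroup H2 F"
  by (rule generate_is_subgroup) (use S_carr commsub_carrier in auto)

lemma H_kill:
  assumes fs: "set fs \<subseteq> carrier F" "length fs = c" and k: "k \<in> H"
  shows "N #> lcomm F k fs = \<one>\<^bsub>Q\<^esub>"
proof -
  interpret Qg: group Q by (rule Qgrp)
  let ?K = "{k \<in> S. N #> lcomm F k fs = \<one>\<^bsub>Q\<^esub>}"
  have sg: "subgroup ?K F"
  proof (rule subgroupI)
    show "?K \<subseteq> carrier F" using S_carr by auto
    have "\<one> \<in> ?K" using fs pr_one normal_imp_subgroup[OF SN] subgroup.one_closed by auto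
    then show "?K \<noteq> {}" by blast
  next
    fix a b assume a: "a \<in> ?K" and b: "b \<in> ?K"
    have "N #> lcomm F (a \<otimes> b) fs = (N #> lcomm F a fs) \<otimes>\<^bsub>Q\<^esub> (N #> lcomm F b fs)"
      by (rule L2[of a 0]) (use a b fs in auto)
    then show "a \<otimes> b \<in> ?K" using a b subgroup.m_closed[OF normal_imp_subgroup[OF SN]] by auto
  next
    fix a assume a: "a \<in> ?K"
    have ia: "inv a \<in> S" using a subgroup.m_inv_closed[OF normal_imp_subgroup[OF SN]] by auto
    have ac: "a \<in> carrier F" using a S_carr by auto
    have "N #> lcomm F (a \<otimes> inv a) fs = (N #> lcomm F a fs) \<otimes>\<^bsub>Q\<^esub> (N #> lcomm F (inv a) fs)"
      by (rule L2[of a 0]) (use a ia fs in auto)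
    then have "\<one>\<^bsub>Q\<^esub> = \<one>\<^bsub>Q\<^esub> \<otimes>\<^bsub>Q\<^esub> (N #> lcomm F (inv a) fs)"
      using a ac fs pr_one by simp
    also have "\<dots> = N #> lcomm F (inv a) fs"
      using pr_carr ac fs by simp
    finally show "inv a \<in> ?K" using ia by simp
  qed
  have "H \<subseteq> ?K"
  proof (rule generate_subgroup_incl[OF _ sg])
    show "R \<union> commsub F S S \<subseteq> ?K"
    proof
      fix u assume "u \<in> R \<union> commsub F S S"
      then show "u \<in> ?K"
      proof
        assume u: "u \<in> R" then show ?thesis using RS L5[OF u fs] pr_N by auto
      next
        assume u: "u \<in> commsub F S S" then show ?thesis using SS_sub_S L6[OF u fs] pr_N by auto
      qed
    qed
  qed
  then show ?thesis using k by auto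
qed

lemma wd_s:
  assumes fs: "set fs \<subseteq> carrier F" "length fs = c" and s: "s \<in> S" "s' \<in> S"
    and eq: "H #> s = H #> s'"
  shows "N #> lcomm F s fs = N #> lcomm F s' fs"
proof -
  interpret Qg: group Q by (rule Qgrp)
  have sc: "s \<in> carrier F" "s' \<in> carrier F" using s S_carr by auto
  have "s \<in> H #> s'" using rcos_self[OF sc(1) H_subgroup] eq by simp
  then obtain h where h: "h \<in> H" "s = h \<otimes> s'" unfolding r_coset_def by auto
  have "N #> lcomm F s fs = (N #> lcomm F h fs) \<otimes>\<^bsub>Q\<^esub> (N #> lcomm F s' fs)"
    unfolding h(2) by (rule L2[of h 0]) (use h H_sub_S s fs in auto)
  also have "\<dots> = N #> lcomm F s' fs" using H_kill[OF fs h(1)] pr_carr sc fs by simp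
  finally show ?thesis .
qed

end


lemma (in group) four_cancel:
  assumes "x1 \<in> carrier G" "x2 \<in> carrier G" "x3 \<in> carrier G" "x4 \<in> carrier G"
    and "x2 \<otimes> x3 = x3 \<otimes> x2" "x1 \<otimes> x3 = \<one>" "x2 \<otimes> x4 = \<one>"
  shows "x1 \<otimes> x2 \<otimes> x3 \<otimes> x4 = \<one>"
proof -
  have "x1 \<otimes> x2 \<otimes> x3 \<otimes> x4 = x1 \<otimes> ((x2 \<otimes> x3) \<otimes> x4)" using assms(1-4) by (simp add: m_assoc)
  also have "\<dots> = x1 \<otimes> ((x3 \<otimes> x2) \<otimes> x4)" using assms(5) by simp
  also have "\<dots> = (x1 \<otimes> x3) \<otimes> (x2 \<otimes> x4)" using assms(1-4) by (simp add: m_assoc)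
  also have "\<dots> = \<one>" using assms(6,7) by simp
  finally show ?thesis .
qed

context L22 begin

lemma lcomm_one_slot:
  "s \<in> carrier F \<Longrightarrow> set as \<subseteq> carrier F \<Longrightarrow> set bs \<subseteq> carrier F \<Longrightarrow> lcomm F s (as @ \<one> # bs) = \<one>"
  by (simp add: lcomm_append)

lemma V_T:
  assumes "s \<in> S" "set as \<subseteq> carrier F" "set bs \<subseteq> carrier F" "z \<in> carrier F"
    "length as + length bs + 1 = c"
  shows "lcomm F s (as @ z # bs) \<in> T c"
proof -
  have l: "length (as @ z # bs) = c" using assms(5) by simp
  have "lcomm F s (as @ z # bs) \<in> T (length (as @ z # bs))"
    by (rule lcomm_in_itcomm[OF SN assms(1)]) (use assms in auto)
  then show ?thesis unfolding l .
qed

lemma H2_kill: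
  assumes s: "s \<in> S" and as: "set as \<subseteq> carrier F" and bs: "set bs \<subseteq> carrier F"
    and len: "length as + length bs + 1 = c" and k: "k \<in> H2"
  shows "N #> lcomm F s (as @ k # bs) = \<one>\<^bsub>Q\<^esub>"
proof -
  interpret Qg: group Q by (rule Qgrp)
  have sc: "s \<in> carrier F" using s S_carr by auto
  define V where "V z = N #> lcomm F s (as @ z # bs)" for z
  have Vc: "V z \<in> carrier Q" if "z \<in> carrier F" for z
    unfolding V_def using that sc as bs by (intro pr_carr) simp
  have Vm: "V (a \<otimes> b) = V a \<otimes>\<^bsub>Q\<^esub> V b" if "a \<in> carrier F" "b \<in> carrier F" for a b
    unfolding V_def by (rule L3[OF s as bs that]) (use len in simp)
  have V1: "V \<one> = \<one>\<^bsub>Q\<^esub>" unfolding V_def using lcomm_one_slot[OF sc as bs] pr_one by simp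
  have Vcomm: "V a \<otimes>\<^bsub>Q\<^esub> V b = V b \<otimes>\<^bsub>Q\<^esub> V a" if "a \<in> carrier F" "b \<in> carrier F" for a b
    unfolding V_def by (rule pr_comm) (use V_T[OF s as bs _ len] that in auto)
  have Vinv: "V (inv a) \<otimes>\<^bsub>Q\<^esub> V a = \<one>\<^bsub>Q\<^esub>" if "a \<in> carrier F" for a
    using Vm[of "inv a" a] that V1 by simp
  let ?K = "{k \<in> carrier F. V k = \<one>\<^bsub>Q\<^esub>}"
  have sg: "subgroup ?K F"
  proof (rule subgroupI)
    show "?K \<subseteq> carrier F" by auto
    show "?K \<noteq> {}" using V1 by blast
  next
    fix a b assume a: "a \<in> ?K" and b: "b \<in> ?K"
    then show "a \<otimes> b \<in> ?K" using Vm by simp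
  next
    fix a assume a: "a \<in> ?K"
    have "V (inv a) = V (inv a) \<otimes>\<^bsub>Q\<^esub> V a" using a Vc[of "inv a"] by simp
    also have "\<dots> = \<one>\<^bsub>Q\<^esub>" by (rule Vinv) (use a in auto)
    finally show "inv a \<in> ?K" using a by simp
  qed
  have "H2 \<subseteq> ?K"
  proof (rule generate_subgroup_incl[OF _ sg])
    show "S \<union> commsub F (carrier F) (carrier F) \<subseteq> ?K"
    proof
      fix u assume "u \<in> S \<union> commsub F (carrier F) (carrier F)"
      then show "u \<in> ?K"
      proof
        assume u: "u \<in> S"
        then show ?thesis using L4[OF s u as bs len] pr_N S_carr unfolding V_def by auto
      next
        assume u: "u \<in> commsub F (carrier F) (carrier F)"
        have gens: "{gcomm F a b |a b. a \<in> carrier F \<and> b \<in> carrier F} \<subseteq> ?K"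
        proof clarify
          fix a b assume ab: "a \<in> carrier F" "b \<in> carrier F"
          have "V (gcomm F a b) = V (inv a \<otimes> inv b \<otimes> a \<otimes> b)" by (simp only: gcomm_def)
          also have "\<dots> = V (inv a \<otimes> inv b \<otimes> a) \<otimes>\<^bsub>Q\<^esub> V b" by (rule Vm) (use ab in auto)
          also have "V (inv a \<otimes> inv b \<otimes> a) = V (inv a \<otimes> inv b) \<otimes>\<^bsub>Q\<^esub> V a" by (rule Vm) (use ab in auto)
          also have "V (inv a \<otimes> inv b) = V (inv a) \<otimes>\<^bsub>Q\<^esub> V (inv b)" by (rule Vm) (use ab in auto)
          also have "V (inv a) \<otimes>\<^bsub>Q\<^esub> V (inv b) \<otimes>\<^bsub>Q\<^esub> V a \<otimes>\<^bsub>Q\<^esub> V b = \<one>\<^bsub>Q\<^esub>"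
            by (rule Qg.four_cancel) (use ab Vc Vcomm Vinv in auto)
          finally show "gcomm F a b \<in> carrier F \<and> V (gcomm F a b) = \<one>\<^bsub>Q\<^esub>" using ab by simp
        qed
        have "commsub F (carrier F) (carrier F) \<subseteq> ?K"
          unfolding commsub_def by (rule generate_subgroup_incl[OF gens sg])
        then show ?thesis using u by blast
      qed
    qed
  qed
  then show ?thesis using k unfolding V_def by auto
qed

lemma wd_f:
  assumes s: "s \<in> S" and fs: "set fs \<subseteq> carrier F" and fs': "set fs' \<subseteq> carrier F"
    and rel: "list_all2 (\<lambda>f f'. H2 #> f = H2 #> f') fs fs'"
    and as: "set as \<subseteq> carrier F" and len: "length as + length fs = c"
  shows "N #> lcomm F s (as @ fs) = N #> lcomm F s (as @ fs')"
  using rel fs fs' as len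
proof (induction fs fs' arbitrary: as rule: list_all2_induct)
  case Nil then show ?case by simp
next
  case (Cons f fs f' fs')
  interpret Qg: group Q by (rule Qgrp)
  have c: "f \<in> carrier F" "f' \<in> carrier F" "set fs \<subseteq> carrier F" "set fs' \<subseteq> carrier F"
    using Cons.prems(1,2) by auto
  have as': "set as \<subseteq> carrier F" using Cons.prems(3) .
  have len': "length as + length fs + 1 = c" using Cons.prems(4) by simp
  have sc: "s \<in> carrier F" using s S_carr by auto
  have "f \<in> H2 #> f" by (rule rcos_self[OF c(1) H2_subgroup])
  then have "f \<in> H2 #> f'" unfolding Cons.hyps(1) .
  then obtain h where h: "h \<in> H2" "f = h \<otimes> f'" unfolding r_coset_def by auto
  have hc: "h \<in> carrier F" using subgroup.mem_carrier[OF H2_subgroup h(1)] .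
  have "N #> lcomm F s (as @ f # fs)
       = (N #> lcomm F s (as @ h # fs)) \<otimes>\<^bsub>Q\<^esub> (N #> lcomm F s (as @ f' # fs))"
    unfolding h(2) by (rule L3[OF s as' c(3) hc c(2)]) (use len' in simp)
  also have "N #> lcomm F s (as @ h # fs) = \<one>\<^bsub>Q\<^esub>" by (rule H2_kill[OF s as' c(3) len' h(1)])
  also have "\<one>\<^bsub>Q\<^esub> \<otimes>\<^bsub>Q\<^esub> (N #> lcomm F s (as @ f' # fs)) = N #> lcomm F s (as @ f' # fs)"
    by (rule Qg.l_one) (rule pr_carr, use sc c as' in simp)
  also have "as @ f' # fs = (as @ [f']) @ fs" by simp
  also have "N #> lcomm F s ((as @ [f']) @ fs) = N #> lcomm F s ((as @ [f']) @ fs')"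
    by (rule Cons.IH) (use c as' len' in auto)
  finally show ?case by simp
qed

end


lemma r_coset_upd: "H #>\<^bsub>G\<lparr>carrier := J\<rparr>\<^esub> a = H #>\<^bsub>G\<^esub> a"
  by (simp add: r_coset_def)

lemma set_mult_upd: "A <#>\<^bsub>G\<lparr>carrier := J\<rparr>\<^esub> B = A <#>\<^bsub>G\<^esub> B"
  by (simp add: set_mult_def)

lemma carrier_Mod_upd: "carrier ((G\<lparr>carrier := J\<rparr>) Mod N) = (\<lambda>x. N #>\<^bsub>G\<^esub> x) ` J"
  by (simp add: carrier_FactGroup r_coset_upd)

lemma mult_Mod_upd: "A \<otimes>\<^bsub>(G\<lparr>carrier := J\<rparr>) Mod N\<^esub> B = A \<otimes>\<^bsub>G Mod N\<^esub> B"
  by (simp add: set_mult_upd)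

lemma one_Mod_upd: "\<one>\<^bsub>(G\<lparr>carrier := J\<rparr>) Mod N\<^esub> = \<one>\<^bsub>G Mod N\<^esub>"
  by simp

context L22 begin

lemma T_subgroup: "subgroup (T n) F" using normal_imp_subgroup[OF T_normal] .

lemma Q0_group:
  assumes NT: "N \<subseteq> T c"
  shows "group ((F\<lparr>carrier := T c\<rparr>) Mod N)"
proof -
  have tg: "group (F\<lparr>carrier := T c\<rparr>)" by (rule subgroup.subgroup_is_group[OF T_subgroup is_group])
  have "N \<lhd> F\<lparr>carrier := T c\<rparr>"
  proof (subst group.normal_inv_iff[OF tg], intro conjI ballI)
    show "subgroup N (F\<lparr>carrier := T c\<rparr>)"
      by (rule subgroup_incl[OF normal_imp_subgroup[OF NN] T_subgroup NT])
  next
    fix x h assume x: "x \<in> carrier (F\<lparr>carrier := T c\<rparr>)" and h: "h \<in> N"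
    have xT: "x \<in> T c" using x by simp
    have xc: "x \<in> carrier F" using xT T_carr by blast
    have "inv\<^bsub>F\<lparr>carrier := T c\<rparr>\<^esub> x = inv x" by (rule m_inv_consistent[OF T_subgroup xT])
    then show "x \<otimes>\<^bsub>F\<lparr>carrier := T c\<rparr>\<^esub> h \<otimes>\<^bsub>F\<lparr>carrier := T c\<rparr>\<^esub> inv\<^bsub>F\<lparr>carrier := T c\<rparr>\<^esub> x \<in> N"
      using normal.inv_op_closed2[OF NN xc h] by simp
  qed
  then show ?thesis by (rule normal.factorgroup_is_group)
qed

lemma Q0_comm:
  assumes NT: "N \<subseteq> T c"
  shows "comm_group ((F\<lparr>carrier := T c\<rparr>) Mod N)"
proof (rule group.group_comm_groupI[OF Q0_group[OF NT]])
  fix x y assume x: "x \<in> carrier ((F\<lparr>carrier := T c\<rparr>) Mod N)" and y: "y \<in> carrier ((F\<lparr>carrier := T c\<rparr>) Mod N)"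
  then obtain a b where ab: "a \<in> T c" "b \<in> T c" "x = N #> a" "y = N #> b"
    unfolding carrier_Mod_upd by auto
  show "x \<otimes>\<^bsub>(F\<lparr>carrier := T c\<rparr>) Mod N\<^esub> y = y \<otimes>\<^bsub>(F\<lparr>carrier := T c\<rparr>) Mod N\<^esub> x"
    unfolding mult_Mod_upd using pr_comm[OF ab(1,2)] ab(3,4) by simp
qed

lemma surj_gen:
  assumes one: "\<one>\<^bsub>Q\<^esub> \<in> I" and mult: "\<And>x y. x \<in> I \<Longrightarrow> y \<in> I \<Longrightarrow> x \<otimes>\<^bsub>Q\<^esub> y \<in> I"
    and inv: "\<And>x y. x \<in> I \<Longrightarrow> y \<in> T c \<Longrightarrow> x \<otimes>\<^bsub>Q\<^esub> (N #> y) = \<one>\<^bsub>Q\<^esub> \<Longrightarrow> N #> y \<in> I"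
    and base: "\<And>s gs. s \<in> S \<Longrightarrow> set gs \<subseteq> carrier F \<Longrightarrow> length gs = c \<Longrightarrow> N #> lcomm F s gs \<in> I"
    and x: "x \<in> T c"
  shows "N #> x \<in> I"
proof -
  have claim: "\<forall>x \<in> T j. \<forall>gs. set gs \<subseteq> carrier F \<longrightarrow> j + length gs = c \<longrightarrow> N #> lcomm F x gs \<in> I"
    if "j \<le> c" for j
    using that
  proof (induction j)
    case 0 then show ?case using base by auto
  next
    case (Suc j)
    have IH: "\<And>x gs. x \<in> T j \<Longrightarrow> set gs \<subseteq> carrier F \<Longrightarrow> j + length gs = c \<Longrightarrow> N #> lcomm F x gs \<in> I"
      using Suc by auto
    show ?case
    proof (intro ballI allI impI)
      fix x gs assume xT: "x \<in> T (Suc j)" and gs: "set gs \<subseteq> carrier F" and len: "Suc j + length gs = c"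
      have gen: "x \<in> generate F {gcomm F h k |h k. h \<in> T j \<and> k \<in> carrier F}"
        using xT by (simp add: commsub_def)
      have inclI: "N #> lcomm F z gs \<in> I" if "z \<in> {gcomm F h k |h k. h \<in> T j \<and> k \<in> carrier F}" for z
      proof -
        from that obtain h k where hk: "z = gcomm F h k" "h \<in> T j" "k \<in> carrier F" by auto
        have "N #> lcomm F h (k # gs) \<in> I" by (rule IH) (use hk gs len in auto)
        then show ?thesis using hk by simp
      qed
      have zT: "z \<in> T (Suc j)" if "z \<in> generate F {gcomm F h k |h k. h \<in> T j \<and> k \<in> carrier F}" for z
        using that by (simp add: commsub_def)
      from gen show "N #> lcomm F x gs \<in> I"
      proof (induction x rule: generate.induct)
        case one then show ?case using gs pr_one assms(1) by simp
      next
        case (incl z) then show ?case by (rule inclI)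
      next
        case (inv z)
        have z1: "z \<in> T (Suc j)" by (rule zT[OF generate.incl[OF inv.hyps]])
        have zc: "z \<in> carrier F" using z1 T_carr by blast
        have iz: "inv z \<in> T (Suc j)" by (rule subgroup.m_inv_closed[OF T_subgroup z1])
        have izS: "inv z \<in> S" using iz T_sub_S by blast
        have "N #> lcomm F (z \<otimes> inv z) gs = (N #> lcomm F z gs) \<otimes>\<^bsub>Q\<^esub> (N #> lcomm F (inv z) gs)"
          by (rule L2[OF z1 izS gs]) (use len in simp)
        moreover have "lcomm F (z \<otimes> inv z) gs = \<one>" using zc gs by simp
        ultimately have e: "(N #> lcomm F z gs) \<otimes>\<^bsub>Q\<^esub> (N #> lcomm F (inv z) gs) = \<one>\<^bsub>Q\<^esub>"
          using pr_one by simp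
        have lT: "lcomm F (inv z) gs \<in> T c"
        proof -
          have "lcomm F (inv z) gs \<in> itcomm F (T (Suc j)) (carrier F) (length gs)"
            by (rule lcomm_in_itcomm[OF T_normal iz gs])
          then have "lcomm F (inv z) gs \<in> T (Suc j + length gs)" unfolding itcomm_add .
          then show ?thesis unfolding len .
        qed
        show ?case by (rule assms(3)[OF inclI[OF inv.hyps] lT e])
      next
        case (eng z1 z2)
        have z1T: "z1 \<in> T (Suc j)" by (rule zT[OF eng.hyps(1)])
        have z2S: "z2 \<in> S" using zT[OF eng.hyps(2)] T_sub_S by blast
        have "N #> lcomm F (z1 \<otimes> z2) gs = (N #> lcomm F z1 gs) \<otimes>\<^bsub>Q\<^esub> (N #> lcomm F z2 gs)"
          by (rule L2[OF z1T z2S gs]) (use len in simp)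
        moreover have "(N #> lcomm F z1 gs) \<otimes>\<^bsub>Q\<^esub> (N #> lcomm F z2 gs) \<in> I"
          by (rule assms(2)[OF eng.IH])
        ultimately show ?case by simp
      qed
    qed
  qed
  show ?thesis using claim[of c] x by auto
qed

end


context L22 begin

lemma H_normal: "H \<lhd> F"
proof (rule normal_generateI)
  show "R \<union> commsub F S S \<subseteq> carrier F" using RS SS_sub_S S_carr by blast
next
  fix h g assume h: "h \<in> R \<union> commsub F S S" and g: "g \<in> carrier F"
  from h show "g \<otimes> h \<otimes> inv g \<in> R \<union> commsub F S S"
  proof
    assume "h \<in> R" then show ?thesis using normal.inv_op_closed2[OF RN g] by blast
  next
    assume "h \<in> commsub F S S"
    then show ?thesis using normal.inv_op_closed2[OF commsub_normal[OF SN SN] g] by blast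
  qed
qed

lemma H2_normal: "H2 \<lhd> F"
proof (rule normal_generateI)
  show "S \<union> commsub F (carrier F) (carrier F) \<subseteq> carrier F" using S_carr commsub_carrier by blast
next
  fix h g assume h: "h \<in> S \<union> commsub F (carrier F) (carrier F)" and g: "g \<in> carrier F"
  from h show "g \<otimes> h \<otimes> inv g \<in> S \<union> commsub F (carrier F) (carrier F)"
  proof
    assume "h \<in> S" then show ?thesis using normal.inv_op_closed2[OF SN g] by blast
  next
    assume "h \<in> commsub F (carrier F) (carrier F)"
    then show ?thesis using normal.inv_op_closed2[OF commsub_normal[OF normal_self normal_self] g] by blast
  qed
qed

definition rep :: "'a set \<Rightarrow> 'a" where "rep b = (SOME s. s \<in> S \<and> b = H #> s)"
definition rep2 :: "'a set \<Rightarrow> 'a" where "rep2 a = (SOME f. f \<in> carrier F \<and> a = H2 #> f)"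
definition fval :: "'a set \<times> 'a set list \<Rightarrow> 'a set"
  where "fval p = N #> lcomm F (rep (fst p)) (map rep2 (snd p))"

lemma rep: "s \<in> S \<Longrightarrow> rep (H #> s) \<in> S \<and> H #> s = H #> rep (H #> s)"
  unfolding rep_def by (rule someI[of "\<lambda>x. x \<in> S \<and> H #> s = H #> x" s]) simp

lemma rep2: "f \<in> carrier F \<Longrightarrow> rep2 (H2 #> f) \<in> carrier F \<and> H2 #> f = H2 #> rep2 (H2 #> f)"
  unfolding rep2_def by (rule someI[of "\<lambda>x. x \<in> carrier F \<and> H2 #> f = H2 #> x" f]) simp

lemma fval_eq:
  assumes s: "s \<in> S" and fs: "set fs \<subseteq> carrier F" and len: "length fs = c"
  shows "fval (H #> s, map (\<lambda>f. H2 #> f) fs) = N #> lcomm F s fs"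
proof -
  define fs0 where "fs0 = map (\<lambda>f. rep2 (H2 #> f)) fs"
  have m: "map rep2 (map (\<lambda>f. H2 #> f) fs) = fs0" by (simp add: fs0_def)
  have fs0c: "set fs0 \<subseteq> carrier F" using fs rep2 unfolding fs0_def by auto
  have len0: "length fs0 = c" using len by (simp add: fs0_def)
  have r: "rep (H #> s) \<in> S" "H #> rep (H #> s) = H #> s" using rep[OF s] by auto
  have "fval (H #> s, map (\<lambda>f. H2 #> f) fs) = N #> lcomm F (rep (H #> s)) fs0"
    unfolding fval_def using m by simp
  also have "\<dots> = N #> lcomm F s fs0" by (rule wd_s[OF fs0c len0 r(1) s r(2)])
  also have "\<dots> = N #> lcomm F s ([] @ fs0)" by simp
  also have "\<dots> = N #> lcomm F s ([] @ fs)"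
  proof (rule wd_f[OF s fs0c fs])
    show "list_all2 (\<lambda>f f'. H2 #> f = H2 #> f') fs0 fs"
      unfolding fs0_def list_all2_map1 list_all2_same using rep2 fs by auto
  qed (use len0 in auto)
  finally show ?thesis by simp
qed

end


lemma hom_free_diff:
  assumes h: "h \<in> hom (free_Abelian_group T) K" and K: "group K"
    and x: "Poly_Mapping.keys x \<subseteq> T" and y: "Poly_Mapping.keys y \<subseteq> T"
  shows "h (x - y) = h x \<otimes>\<^bsub>K\<^esub> inv\<^bsub>K\<^esub> (h y)"
proof -
  interpret gh: group_hom "free_Abelian_group T" K h
    unfolding group_hom_def group_hom_axioms_def using h K by simp
  have "h (x - y) = h (x \<otimes>\<^bsub>free_Abelian_group T\<^esub> inv\<^bsub>free_Abelian_group T\<^esub> y)"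
    using y by simp
  also have "\<dots> = h x \<otimes>\<^bsub>K\<^esub> h (inv\<^bsub>free_Abelian_group T\<^esub> y)"
    by (rule gh.hom_mult) (use x y in simp_all)
  also have "h (inv\<^bsub>free_Abelian_group T\<^esub> y) = inv\<^bsub>K\<^esub> (h y)"
    by (rule gh.hom_inv) (use y in simp)
  finally show ?thesis .
qed

lemma (in comm_group) cancel_pair:
  "x \<in> carrier G \<Longrightarrow> y \<in> carrier G \<Longrightarrow> (x \<otimes> y) \<otimes> inv x \<otimes> inv y = \<one>"
proof -
  assume a: "x \<in> carrier G" "y \<in> carrier G"
  have "(x \<otimes> y) \<otimes> inv x \<otimes> inv y = (x \<otimes> y) \<otimes> (inv x \<otimes> inv y)" using a by (simp add: m_assoc)
  also have "inv x \<otimes> inv y = inv (x \<otimes> y)" using a by (simp add: inv_mult)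
  also have "(x \<otimes> y) \<otimes> inv (x \<otimes> y) = \<one>" using a by simp
  finally show ?thesis .
qed

context L22 begin

lemma Bab_mult:
  assumes "s1 \<in> S" "s2 \<in> S"
  shows "(H #> s1) \<otimes>\<^bsub>(F\<lparr>carrier := S\<rparr>) Mod H\<^esub> (H #> s2) = H #> (s1 \<otimes> s2)"
  using assms S_carr normal.rcos_sum[OF H_normal] by (auto simp: mult_Mod_upd mult_FactGroup)

lemma Aab_mult:
  assumes "f1 \<in> carrier F" "f2 \<in> carrier F"
  shows "(H2 #> f1) \<otimes>\<^bsub>F Mod H2\<^esub> (H2 #> f2) = H2 #> (f1 \<otimes> f2)"
  using assms normal.rcos_sum[OF H2_normal] by (auto simp: mult_FactGroup)

lemma gens_form:
  assumes "p \<in> tens_gens ((F\<lparr>carrier := S\<rparr>) Mod H) (F Mod H2) c"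
  shows "\<exists>s fs. s \<in> S \<and> set fs \<subseteq> carrier F \<and> length fs = c \<and> p = (H #> s, map (\<lambda>f. H2 #> f) fs)"
proof -
  obtain b as where p: "p = (b, as)" "b \<in> carrier ((F\<lparr>carrier := S\<rparr>) Mod H)" "length as = c"
    "set as \<subseteq> carrier (F Mod H2)"
    using assms unfolding tens_gens_def by auto
  obtain s where s: "s \<in> S" "b = H #> s" using p(2) unfolding carrier_Mod_upd by auto
  have ac: "\<And>a. a \<in> set as \<Longrightarrow> rep2 a \<in> carrier F \<and> a = H2 #> rep2 a"
  proof -
    fix a assume "a \<in> set as"
    then obtain f where f: "f \<in> carrier F" "a = H2 #> f" using p(4) unfolding carrier_FactGroup by auto
    then show "rep2 a \<in> carrier F \<and> a = H2 #> rep2 a" using rep2[OF f(1)] by simp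
  qed
  have "map (\<lambda>f. H2 #> f) (map rep2 as) = as"
    by (simp, rule map_idI) (use ac in auto)
  then show ?thesis using s p ac by (intro exI[of _ s] exI[of _ "map rep2 as"]) auto
qed

end



theorem lemma22:
  fixes F :: "('a, 'b) monoid_scheme" and R S :: "'a set" and c :: nat
  assumes "free_group F"
    and "R \<lhd> F" and "S \<lhd> F" and "R \<subseteq> S"
    and "c \<ge> 1"
  defines "Bab \<equiv> (F\<lparr>carrier := S\<rparr>) Mod (generate F (R \<union> commsub F S S))"
    and "Aab \<equiv> F Mod (generate F (S \<union> commsub F (carrier F) (carrier F)))"
    and "N \<equiv> generate F (itcomm F R (carrier F) c \<union> itcomm F S (carrier F) (Suc c)
                          \<union> (\<Union>i\<in>{2..c+1}. gammaSF F S c i))"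
  shows "\<exists>\<phi>. \<phi> \<in> epi (tensor Bab Aab c) ((F\<lparr>carrier := itcomm F S (carrier F) c\<rparr>) Mod N)
           \<and> (\<forall>s \<in> S. \<forall>fs. length fs = c \<and> set fs \<subseteq> carrier F \<longrightarrow>
                \<phi> (pure_tensor Bab Aab c
                      (generate F (R \<union> commsub F S S) #>\<^bsub>F\<^esub> s)
                      (map (\<lambda>f. generate F (S \<union> commsub F (carrier F) (carrier F)) #>\<^bsub>F\<^esub> f) fs))
                = N #>\<^bsub>F\<^esub> lcomm F s fs)"
proof -
  have grp: "group F" using assms(1) by (simp add: free_group_def)
  interpret group F by (rule grp)
  note RN = assms(2) and SN = assms(3) and RS = assms(4)
  let ?U = "itcomm F R (carrier F) c \<union> itcomm F S (carrier F) (Suc c) \<union> (\<Union>i\<in>{2..c+1}. gammaSF F S c i)"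
  have n1: "itcomm F R (carrier F) c \<lhd> F" by (rule itcomm_normal[OF RN])
  have n2: "itcomm F S (carrier F) (Suc c) \<lhd> F" by (rule itcomm_normal[OF SN])
  have gnorm: "gammaSF F S c i \<lhd> F" if "i \<in> {2..c+1}" for i
  proof -
    have "gammaSF F S c i = itcomm F (commsub F (itcomm F S (carrier F) (i - 2)) S) (carrier F) (c + 1 - i)"
      using that by (intro gammaSF_eq) auto
    then show ?thesis using itcomm_normal[OF commsub_normal[OF itcomm_normal[OF SN] SN]] by simp
  qed
  have NN: "N \<lhd> F" unfolding N_def
  proof (rule normal_generateI)
    show "?U \<subseteq> carrier F"
      using normal_carrier_sub[OF n1] normal_carrier_sub[OF n2] normal_carrier_sub[OF gnorm] by blast
  next
    fix h g assume h: "h \<in> ?U" and g: "g \<in> carrier F"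
    show "g \<otimes>\<^bsub>F\<^esub> h \<otimes>\<^bsub>F\<^esub> inv\<^bsub>F\<^esub> g \<in> ?U"
    proof (cases "h \<in> itcomm F R (carrier F) c")
      case True then show ?thesis using normal.inv_op_closed2[OF n1 g] by blast
    next
      case False
      show ?thesis
      proof (cases "h \<in> itcomm F S (carrier F) (Suc c)")
        case True then show ?thesis using normal.inv_op_closed2[OF n2 g] by blast
      next
        case False2: False
        then obtain i where i: "i \<in> {2..c+1}" "h \<in> gammaSF F S c i" using h False by blast
        then show ?thesis using normal.inv_op_closed2[OF gnorm[OF i(1)] g i(2)] by blast
      qed
    qed
  qed
  have NU: "?U \<subseteq> N" unfolding N_def by (auto intro: generate.incl)
  have L: "L22 F R S N c"
  proof (rule L22.intro[OF grp], rule L22_axioms.intro)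
    show "R \<lhd> F" "S \<lhd> F" "R \<subseteq> S" "N \<lhd> F" by (fact RN, fact SN, fact RS, fact NN)
    show "itcomm F R (carrier F) c \<subseteq> N" "itcomm F S (carrier F) (Suc c) \<subseteq> N" using NU by auto
    show "\<And>i. 2 \<le> i \<Longrightarrow> i \<le> c + 1 \<Longrightarrow> gammaSF F S c i \<subseteq> N"
    proof -
      fix i assume "2 \<le> i" "i \<le> c + 1"
      then have "i \<in> {2..c+1}" by simp
      then show "gammaSF F S c i \<subseteq> N" using NU by blast
    qed
  qed
  interpret L: L22 F R S N c by (rule L)
  let ?T = "itcomm F S (carrier F)"
  let ?Q0 = "(F\<lparr>carrier := ?T c\<rparr>) Mod N"
  have NT: "N \<subseteq> ?T c" unfolding N_def
  proof (rule generate_subgroup_incl[OF _ L.T_subgroup])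
    have a: "itcomm F R (carrier F) c \<subseteq> ?T c" by (rule itcomm_mono[OF RS])
    have b: "?T (Suc c) \<subseteq> ?T c" by (rule itcomm_antimono[OF SN]) simp
    have g: "gammaSF F S c i \<subseteq> ?T c" if i: "i \<in> {2..c+1}" for i
    proof -
      have "gammaSF F S c i = itcomm F (commsub F (?T (i - 2)) S) (carrier F) (c + 1 - i)"
        using i by (intro gammaSF_eq) auto
      also have "\<dots> \<subseteq> itcomm F (commsub F (?T (i - 2)) (carrier F)) (carrier F) (c + 1 - i)"
        by (rule itcomm_mono, rule commsub_mono) (use L.S_carr in auto)
      also have "itcomm F (commsub F (?T (i - 2)) (carrier F)) (carrier F) (c + 1 - i) = ?T c"
      proof -
        have e1: "commsub F (?T (i - 2)) (carrier F) = ?T (Suc (i - 2))" by simp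
        have e2: "Suc (i - 2) + (c + 1 - i) = c" using i by auto
        show ?thesis unfolding e1 itcomm_add e2 ..
      qed
      finally show ?thesis .
    qed
    show "?U \<subseteq> ?T c" using a b g by blast
  qed
  have Q0c: "comm_group ?Q0" by (rule L.Q0_comm[OF NT])
  interpret Q0: comm_group ?Q0 by (rule Q0c)
  let ?H = "generate F (R \<union> commsub F S S)"
  let ?H2 = "generate F (S \<union> commsub F (carrier F) (carrier F))"
  let ?gens = "tens_gens Bab Aab c"
  let ?G = "free_Abelian_group ?gens"
  interpret Gg: comm_group ?G by (rule abelian_free_Abelian_group)
  have gensf: "\<exists>s fs. s \<in> S \<and> set fs \<subseteq> carrier F \<and> length fs = c \<and> p = (?H #>\<^bsub>F\<^esub> s, map (\<lambda>f. ?H2 #>\<^bsub>F\<^esub> f) fs)"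
    if "p \<in> ?gens" for p
    using L.gens_form that unfolding Bab_def Aab_def by blast
  have gen_in: "(?H #>\<^bsub>F\<^esub> s, map (\<lambda>f. ?H2 #>\<^bsub>F\<^esub> f) fs) \<in> ?gens"
    if "s \<in> S" "set fs \<subseteq> carrier F" "length fs = c" for s fs
    unfolding tens_gens_def Bab_def Aab_def carrier_Mod_upd carrier_FactGroup using that by auto
  have fv_car: "L.fval p \<in> carrier ?Q0" if p: "p \<in> ?gens" for p
  proof -
    obtain s fs where sf: "s \<in> S" "set fs \<subseteq> carrier F" "length fs = c" "p = (?H #>\<^bsub>F\<^esub> s, map (\<lambda>f. ?H2 #>\<^bsub>F\<^esub> f) fs)"
      using gensf[OF p] by blast
    have "L.fval p = N #>\<^bsub>F\<^esub> lcomm F s fs" using L.fval_eq[OF sf(1-3)] sf(4) by simp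
    moreover have "lcomm F s fs \<in> ?T c" using lcomm_in_itcomm[OF SN sf(1,2)] sf(3) by simp
    ultimately show ?thesis unfolding carrier_Mod_upd by auto
  qed
  obtain hh where hh: "hh \<in> hom ?G ?Q0" "\<And>x. x \<in> ?gens \<Longrightarrow> hh (frag_of x) = L.fval x"
    using Q0.free_Abelian_group_universal[of L.fval ?gens] fv_car by blast
  have ghom: "group_hom ?G ?Q0 hh"
    unfolding group_hom_def group_hom_axioms_def using hh(1) Q0.is_group Gg.is_group by simp
  have hv: "hh (frag_of (?H #>\<^bsub>F\<^esub> s, map (\<lambda>f. ?H2 #>\<^bsub>F\<^esub> f) fs)) = N #>\<^bsub>F\<^esub> lcomm F s fs"
    if "s \<in> S" "set fs \<subseteq> carrier F" "length fs = c" for s fs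
    using hh(2)[OF gen_in[OF that]] L.fval_eq[OF that] by simp
  have relgen: "frag_of A - frag_of B - frag_of C' \<in> carrier ?G \<and> hh (frag_of A - frag_of B - frag_of C') = \<one>\<^bsub>?Q0\<^esub>"
    if A: "A \<in> ?gens" and B: "B \<in> ?gens" and C': "C' \<in> ?gens"
      and eq: "L.fval A = L.fval B \<otimes>\<^bsub>?Q0\<^esub> L.fval C'" for A B C'
  proof
    have kA: "Poly_Mapping.keys (frag_of A - frag_of B) \<subseteq> ?gens"
      using keys_diff[of "frag_of A" "frag_of B"] A B by (auto simp: keys_frag_of)
    show "frag_of A - frag_of B - frag_of C' \<in> carrier ?G"
      using keys_diff[of "frag_of A - frag_of B" "frag_of C'"] kA C' by (auto simp: keys_frag_of)
    have "hh (frag_of A - frag_of B - frag_of C') = hh (frag_of A - frag_of B) \<otimes>\<^bsub>?Q0\<^esub> inv\<^bsub>?Q0\<^esub> hh (frag_of C')"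
      by (rule hom_free_diff[OF hh(1) Q0.is_group kA]) (use C' in \<open>simp add: keys_frag_of\<close>)
    also have "hh (frag_of A - frag_of B) = hh (frag_of A) \<otimes>\<^bsub>?Q0\<^esub> inv\<^bsub>?Q0\<^esub> hh (frag_of B)"
      by (rule hom_free_diff[OF hh(1) Q0.is_group]) (use A B in \<open>simp_all add: keys_frag_of\<close>)
    finally show "hh (frag_of A - frag_of B - frag_of C') = \<one>\<^bsub>?Q0\<^esub>"
      using hh(2)[OF A] hh(2)[OF B] hh(2)[OF C'] eq Q0.cancel_pair[OF fv_car[OF B] fv_car[OF C']] by simp
  qed
  have fvs: "L.fval (?H #>\<^bsub>F\<^esub> s, map (\<lambda>f. ?H2 #>\<^bsub>F\<^esub> f) fs) = N #>\<^bsub>F\<^esub> lcomm F s fs"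
    if "s \<in> S" "set fs \<subseteq> carrier F" "length fs = c" for s fs
    by (rule L.fval_eq[OF that])
  have rels: "r \<in> carrier ?G \<and> hh r = \<one>\<^bsub>?Q0\<^esub>" if r: "r \<in> tens_rels Bab Aab c" for r
  proof -
    from r consider
      (one) b1 b2 as where "r = frag_of (b1 \<otimes>\<^bsub>Bab\<^esub> b2, as) - frag_of (b1, as) - frag_of (b2, as)"
        "b1 \<in> carrier Bab" "b2 \<in> carrier Bab" "length as = c" "set as \<subseteq> carrier Aab"
    | (two) b as j a1 a2 where "r = frag_of (b, as[j := a1 \<otimes>\<^bsub>Aab\<^esub> a2]) - frag_of (b, as[j := a1]) - frag_of (b, as[j := a2])"
        "b \<in> carrier Bab" "length as = c" "set as \<subseteq> carrier Aab" "j < c" "a1 \<in> carrier Aab" "a2 \<in> carrier Aab"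
      unfolding tens_rels_def by blast
    then show ?thesis
    proof cases
      case one
      have g1: "(b1, as) \<in> ?gens" using one unfolding tens_gens_def by auto
      obtain s1 fs where sf: "s1 \<in> S" "set fs \<subseteq> carrier F" "length fs = c"
        "(b1, as) = (?H #>\<^bsub>F\<^esub> s1, map (\<lambda>f. ?H2 #>\<^bsub>F\<^esub> f) fs)"
        using gensf[OF g1] by blast
      obtain s2 where s2: "s2 \<in> S" "b2 = ?H #>\<^bsub>F\<^esub> s2"
        using one(3) unfolding Bab_def carrier_Mod_upd by auto
      have s12: "s1 \<otimes>\<^bsub>F\<^esub> s2 \<in> S" by (rule subgroup.m_closed[OF normal_imp_subgroup[OF SN] sf(1) s2(1)])
      have bm: "b1 \<otimes>\<^bsub>Bab\<^esub> b2 = ?H #>\<^bsub>F\<^esub> (s1 \<otimes>\<^bsub>F\<^esub> s2)"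
        using L.Bab_mult[OF sf(1) s2(1)] sf(4) s2(2) unfolding Bab_def by simp
      have as: "as = map (\<lambda>f. ?H2 #>\<^bsub>F\<^esub> f) fs" using sf(4) by simp
      have b1: "b1 = ?H #>\<^bsub>F\<^esub> s1" using sf(4) by simp
      have e: "L.fval (?H #>\<^bsub>F\<^esub> (s1 \<otimes>\<^bsub>F\<^esub> s2), as)
             = L.fval (b1, as) \<otimes>\<^bsub>?Q0\<^esub> L.fval (b2, as)"
        unfolding as b1 s2(2) fvs[OF s12 sf(2,3)] fvs[OF sf(1-3)] fvs[OF s2(1) sf(2,3)] mult_Mod_upd
        by (rule L.L2[of s1 0]) (use sf s2 in auto)
      show ?thesis unfolding one(1) bm
        by (rule relgen[OF _ g1 _ e]) (use gen_in[OF s12 sf(2,3)] gen_in[OF s2(1) sf(2,3)] as s2(2) in auto)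
    next
      case two
      have g0: "(b, as) \<in> ?gens" using two unfolding tens_gens_def by auto
      obtain s fs where sf: "s \<in> S" "set fs \<subseteq> carrier F" "length fs = c"
        "(b, as) = (?H #>\<^bsub>F\<^esub> s, map (\<lambda>f. ?H2 #>\<^bsub>F\<^esub> f) fs)"
        using gensf[OF g0] by blast
      obtain f1 where f1: "f1 \<in> carrier F" "a1 = ?H2 #>\<^bsub>F\<^esub> f1"
        using two(6) unfolding Aab_def carrier_FactGroup by auto
      obtain f2 where f2: "f2 \<in> carrier F" "a2 = ?H2 #>\<^bsub>F\<^esub> f2"
        using two(7) unfolding Aab_def carrier_FactGroup by auto
      have f12: "f1 \<otimes>\<^bsub>F\<^esub> f2 \<in> carrier F" using f1 f2 by simp
      have am: "a1 \<otimes>\<^bsub>Aab\<^esub> a2 = ?H2 #>\<^bsub>F\<^esub> (f1 \<otimes>\<^bsub>F\<^esub> f2)"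
        using L.Aab_mult[OF f1(1) f2(1)] f1(2) f2(2) unfolding Aab_def by simp
      have as: "as = map (\<lambda>f. ?H2 #>\<^bsub>F\<^esub> f) fs" and b: "b = ?H #>\<^bsub>F\<^esub> s" using sf(4) by simp_all
      have upd: "as[j := ?H2 #>\<^bsub>F\<^esub> f] = map (\<lambda>f. ?H2 #>\<^bsub>F\<^esub> f) (fs[j := f])" for f
        unfolding as by (simp add: map_update)
      have updc: "set (fs[j := f]) \<subseteq> carrier F" if "f \<in> carrier F" for f
        using set_update_subset_insert[of fs j f] sf(2) that by blast
      have updl: "length (fs[j := f]) = c" for f using sf(3) by simp
      have tk: "fs[j := f] = take j fs @ f # drop (Suc j) fs" for f
        using two(5) sf(3) by (simp add: upd_conv_take_nth_drop)
      have e: "L.fval (b, as[j := ?H2 #>\<^bsub>F\<^esub> (f1 \<otimes>\<^bsub>F\<^esub> f2)])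
             = L.fval (b, as[j := a1]) \<otimes>\<^bsub>?Q0\<^esub> L.fval (b, as[j := a2])"
        unfolding f1(2) f2(2) upd b fvs[OF sf(1) updc[OF f12] updl] fvs[OF sf(1) updc[OF f1(1)] updl]
          fvs[OF sf(1) updc[OF f2(1)] updl] mult_Mod_upd
        unfolding tk
        by (rule L.L3) (use sf f1 f2 two(5) in \<open>auto dest: in_set_takeD in_set_dropD\<close>)
      show ?thesis unfolding two(1) am
      proof (rule relgen[OF _ _ _ e])
        show "(b, as[j := ?H2 #>\<^bsub>F\<^esub> (f1 \<otimes>\<^bsub>F\<^esub> f2)]) \<in> ?gens"
          unfolding upd b by (rule gen_in[OF sf(1) updc[OF f12] updl])
        show "(b, as[j := a1]) \<in> ?gens"
          unfolding f1(2) upd b by (rule gen_in[OF sf(1) updc[OF f1(1)] updl])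
        show "(b, as[j := a2]) \<in> ?gens"
          unfolding f2(2) upd b by (rule gen_in[OF sf(1) updc[OF f2(1)] updl])
      qed
    qed
  qed
  let ?gen = "generate ?G (tens_rels Bab Aab c)"
  have relsc: "tens_rels Bab Aab c \<subseteq> carrier ?G" using rels by blast
  have sub_ker: "?gen \<subseteq> kernel ?G ?Q0 hh"
  proof (rule Gg.generate_subgroup_incl[OF _ group_hom.subgroup_kernel[OF ghom]])
    show "tens_rels Bab Aab c \<subseteq> kernel ?G ?Q0 hh" using rels unfolding kernel_def by blast
  qed
  have gen_norm: "?gen \<lhd> ?G"
    using Gg.normal_iff_subgroup Gg.generate_is_subgroup[OF relsc] by blast
  obtain g where g: "g \<in> hom (?G Mod ?gen) ?Q0" "\<And>x. x \<in> carrier ?G \<Longrightarrow> g (?gen #>\<^bsub>?G\<^esub> x) = hh x"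
    using group_hom.FactGroup_universal_kernel[OF ghom gen_norm sub_ker] by blast
  have tens: "tensor Bab Aab c = ?G Mod ?gen" by (simp add: tensor_def tens_free_def)
  have img: "g ` carrier (?G Mod ?gen) = hh ` carrier ?G"
    unfolding carrier_FactGroup image_image using g(2) by (auto simp: image_iff)
  have himg: "hh ` carrier ?G = carrier ?Q0"
  proof
    show "hh ` carrier ?G \<subseteq> carrier ?Q0" using hom_in_carrier[OF hh(1)] by (simp add: image_subset_iff)
  next
    have sgI: "subgroup (hh ` carrier ?G) ?Q0" by (rule group_hom.img_is_subgroup[OF ghom])
    show "carrier ?Q0 \<subseteq> hh ` carrier ?G"
    proof
      fix y assume "y \<in> carrier ?Q0"
      then obtain x where x: "x \<in> ?T c" "y = N #>\<^bsub>F\<^esub> x" unfolding carrier_Mod_upd by auto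
      have "N #>\<^bsub>F\<^esub> x \<in> hh ` carrier ?G"
      proof (rule L.surj_gen[OF _ _ _ _ x(1)])
        have "\<one>\<^bsub>?Q0\<^esub> \<in> hh ` carrier ?G" by (rule subgroup.one_closed[OF sgI])
        then show "\<one>\<^bsub>F Mod N\<^esub> \<in> hh ` carrier ?G" by (simp only: one_Mod_upd)
      next
        fix a b assume "a \<in> hh ` carrier ?G" "b \<in> hh ` carrier ?G"
        then have "a \<otimes>\<^bsub>?Q0\<^esub> b \<in> hh ` carrier ?G" by (rule subgroup.m_closed[OF sgI])
        then show "a \<otimes>\<^bsub>F Mod N\<^esub> b \<in> hh ` carrier ?G" by (simp only: mult_Mod_upd)
      next
        fix a z assume a: "a \<in> hh ` carrier ?G" and z: "z \<in> ?T c"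
          and e: "a \<otimes>\<^bsub>F Mod N\<^esub> (N #>\<^bsub>F\<^esub> z) = \<one>\<^bsub>F Mod N\<^esub>"
        obtain a0 where a0: "a0 \<in> carrier ?G" "a = hh a0" using a by blast
        have ac: "a \<in> carrier ?Q0" unfolding a0(2) by (rule hom_in_carrier[OF hh(1) a0(1)])
        have zc: "N #>\<^bsub>F\<^esub> z \<in> carrier ?Q0" using z unfolding carrier_Mod_upd by auto
        have "a \<otimes>\<^bsub>?Q0\<^esub> (N #>\<^bsub>F\<^esub> z) = \<one>\<^bsub>?Q0\<^esub>" using e by (simp only: mult_Mod_upd one_Mod_upd)
        then have "(N #>\<^bsub>F\<^esub> z) \<otimes>\<^bsub>?Q0\<^esub> a = \<one>\<^bsub>?Q0\<^esub>" by (simp only: Q0.m_comm[OF ac zc])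
        then have "inv\<^bsub>?Q0\<^esub> a = N #>\<^bsub>F\<^esub> z" by (rule Q0.inv_equality[OF _ ac zc])
        then show "N #>\<^bsub>F\<^esub> z \<in> hh ` carrier ?G" using subgroup.m_inv_closed[OF sgI a] by simp
      next
        fix s gs assume sg: "s \<in> S" "set gs \<subseteq> carrier F" "length gs = c"
        have "frag_of (?H #>\<^bsub>F\<^esub> s, map (\<lambda>f. ?H2 #>\<^bsub>F\<^esub> f) gs) \<in> carrier ?G"
          using gen_in[OF sg] by simp
        then have "hh (frag_of (?H #>\<^bsub>F\<^esub> s, map (\<lambda>f. ?H2 #>\<^bsub>F\<^esub> f) gs)) \<in> hh ` carrier ?G"
          by (rule imageI)
        then show "N #>\<^bsub>F\<^esub> lcomm F s gs \<in> hh ` carrier ?G" unfolding hv[OF sg] .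
      qed
      then show "y \<in> hh ` carrier ?G" using x by simp
    qed
  qed
  show ?thesis
  proof (intro exI conjI ballI allI impI)
    show "g \<in> epi (tensor Bab Aab c) ?Q0"
      unfolding epi_def tens using g(1) img himg by simp
  next
    fix s fs assume s: "s \<in> S" and fs: "length fs = c \<and> set fs \<subseteq> carrier F"
    have "pure_tensor Bab Aab c (?H #>\<^bsub>F\<^esub> s) (map (\<lambda>f. ?H2 #>\<^bsub>F\<^esub> f) fs)
        = ?gen #>\<^bsub>?G\<^esub> frag_of (?H #>\<^bsub>F\<^esub> s, map (\<lambda>f. ?H2 #>\<^bsub>F\<^esub> f) fs)"
      by (simp add: pure_tensor_def tens_free_def)
    also have "g \<dots> = hh (frag_of (?H #>\<^bsub>F\<^esub> s, map (\<lambda>f. ?H2 #>\<^bsub>F\<^esub> f) fs))"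
      by (rule g(2)) (use gen_in[OF s] fs in simp)
    also have "\<dots> = N #>\<^bsub>F\<^esub> lcomm F s fs" using hv[OF s] fs by simp
    finally show "g (pure_tensor Bab Aab c (?H #>\<^bsub>F\<^esub> s) (map (\<lambda>f. ?H2 #>\<^bsub>F\<^esub> f) fs))
        = N #>\<^bsub>F\<^esub> lcomm F s fs" .
  qed
qed



end
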